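(* Let $k,r,p>0$ be integers and let $F:\mathbb{N}^k\to\mathbb{N}^r$ be any function. Then there exists $E\subseteq\mathbb{N}$ with $|E|=p$ such that $F$ has at most $k^k\,p$ regressive values on $E^k$.
   Context: $\mathbb{N}=\{0,1,2,\dots\}$. For $x\in\mathbb{N}^k$, $\min(x)$ is the minimum coordinate and $|x|$ the maximum coordinate of $x$. For $B\subseteq\mathbb{N}^k$ and a function $F$ defined on $B$ with values in $\mathbb{N}^r$, an element $y$ is a regressive value of $F$ on $B$ iff there exists $x\in B$ with $F(x)=y$ and $|y|<\min(x)$. *)

theory Defs
  imports Main
begin

text \<open>Elements of N^k are represented as lists of naturals of length k.
  min(x) is the minimum coordinate, |x| the maximum coordinate.\<close>

definition minc :: "nat list \<Rightarrow> nat" where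
  "minc x = Min (set x)"

definition maxc :: "nat list \<Rightarrow> nat" where
  "maxc x = Max (set x)"

definition cube :: "nat set \<Rightarrow> nat \<Rightarrow> nat list set" where
  "cube E k = {x. length x = k \<and> set x \<subseteq> E}"

definition regressive_values :: "(nat list \<Rightarrow> nat list) \<Rightarrow> nat list set \<Rightarrow> nat list set" where
  "regressive_values F B = {y. \<exists>x\<in>B. F x = y \<and> maxc y < minc x}"

end

theory Submission
  imports Defs "HOL-Library.Ramsey"
begin

definition rk :: "nat set \<Rightarrow> nat \<Rightarrow> nat" where
  "rk S v = card {u\<in>S. u < v}"

definition shape :: "nat list \<Rightarrow> nat list" where
  "shape x = map (rk (set x)) x"

definition inst :: "nat list \<Rightarrow> nat set \<Rightarrow> nat list" where
  "inst p S = map (\<lambda>i. THE v. v \<in> S \<and> rk S v = i) p"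

definition gv :: "(nat list \<Rightarrow> nat list) \<Rightarrow> nat list \<Rightarrow> nat list option" where
  "gv F x = (if maxc (F x) < minc x then Some (F x) else None)"

lemma rk_mono:
  assumes "finite S" "v \<in> S" "w \<in> S" "v < w"
  shows "rk S v < rk S w"
proof -
  have "{u\<in>S. u < v} \<subset> {u\<in>S. u < w}" using assms by auto
  then show ?thesis unfolding rk_def using assms(1) by (simp add: psubset_card_mono)
qed

lemma rk_inj: "finite S \<Longrightarrow> inj_on (rk S) S"
  by (metis inj_on_def linorder_neqE_nat rk_mono less_irrefl)

lemma rk_the: assumes "finite S" "v \<in> S"
  shows "(THE w. w \<in> S \<and> rk S w = rk S v) = v"
  using assms rk_inj[OF assms(1)] by (auto simp: inj_on_def)

lemma inst_shape: "inst (shape x) (set x) = x"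
proof -
  show ?thesis
    unfolding inst_def shape_def by (simp, rule map_idI) (simp add: rk_the)
qed

lemma card_shape: "card (set (shape x)) = card (set x)"
  unfolding shape_def using rk_inj[of "set x"] by (simp add: card_image)

lemma shape_bound: "set (shape x) \<subseteq> {..<length x}"
proof
  fix i assume "i \<in> set (shape x)"
  then obtain v where v: "v \<in> set x" "i = rk (set x) v" unfolding shape_def by auto
  have "{u\<in>set x. u < v} \<subset> set x" using v by auto
  then have "i < card (set x)" using v by (simp add: rk_def psubset_card_mono)
  also have "\<dots> \<le> length x" by (rule card_length)
  finally show "i \<in> {..<length x}" by simp
qed

lemma length_inst[simp]: "length (inst p S) = length p"
  by (simp add: inst_def)

lemma minc_in: "x \<noteq> [] \<Longrightarrow> minc x \<in> set x"
  by (simp add: minc_def)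

lemma minc_le: "v \<in> set x \<Longrightarrow> minc x \<le> v"
  by (simp add: minc_def)

lemma ramsey_fin:
  fixes c :: "nat set \<Rightarrow> 'b"
  assumes "infinite Z" "finite C" "\<forall>T. T \<subseteq> Z \<and> finite T \<and> card T = j \<longrightarrow> c T \<in> C"
  shows "\<exists>Y\<subseteq>Z. infinite Y \<and> (\<forall>T T'. T \<subseteq> Y \<and> finite T \<and> card T = j \<and> T' \<subseteq> Y \<and> finite T' \<and> card T' = j \<longrightarrow> c T = c T')"
proof -
  obtain h where h: "bij_betw h C {0..<card C}" using ex_bij_betw_finite_nat[OF assms(2)] by blast
  have "\<forall>X. X \<subseteq> Z \<and> finite X \<and> card X = j \<longrightarrow> (h \<circ> c) X < card C"
    using assms(3) h by (auto simp: bij_betw_def)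
  from Ramsey[OF assms(1) this] obtain Y t where Y: "Y \<subseteq> Z" "infinite Y"
    "\<forall>X. X \<subseteq> Y \<and> finite X \<and> card X = j \<longrightarrow> (h \<circ> c) X = t" by blast
  show ?thesis
  proof (intro exI[of _ Y] conjI allI impI)
    fix T T' assume T: "T \<subseteq> Y \<and> finite T \<and> card T = j \<and> T' \<subseteq> Y \<and> finite T' \<and> card T' = j"
    then have "h (c T) = h (c T')" using Y(3) by auto
    moreover have "c T \<in> C" "c T' \<in> C" using T Y(1) assms(3) by auto
    ultimately show "c T = c T'" using h by (auto simp: bij_betw_def inj_on_def)
  qed (use Y in auto)
qed

lemma step_single:
  fixes F :: "nat list \<Rightarrow> nat list"
  assumes Z0: "infinite Z0" "\<forall>z\<in>Z0. a < z"
    and FL: "\<forall>x. length x = k \<longrightarrow> length (F x) = r" and r: "r > 0" and p: "length p = k" and k: "k > 0"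
  shows "\<exists>Z'\<subseteq>Z0. infinite Z' \<and> (\<forall>x\<in>cube (insert a Z') k. \<forall>x'\<in>cube (insert a Z') k.
     shape x = p \<and> shape x' = p \<and> minc x = a \<and> minc x' = a \<longrightarrow> gv F x = gv F x')"
proof -
  define j where "j = card (set p) - 1"
  define c where "c T = (if maxc (F (inst p (insert a T))) < a then Some (F (inst p (insert a T))) else None)" for T
  define C where "C = insert None (Some ` {y. set y \<subseteq> {..<a} \<and> length y = r})"
  have fC: "finite C" unfolding C_def by (simp add: finite_lists_length_eq)
  have cC: "\<forall>T. T \<subseteq> Z0 \<and> finite T \<and> card T = j \<longrightarrow> c T \<in> C"
  proof (intro allI impI)
    fix T
    let ?y = "F (inst p (insert a T))"
    have ly: "length ?y = r" using FL p by simp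
    then have ne: "set ?y \<noteq> {}" using r by auto
    show "c T \<in> C"
    proof (cases "maxc ?y < a")
      case True
      have "set ?y \<subseteq> {..<a}"
      proof
        fix v assume "v \<in> set ?y"
        then have "v \<le> maxc ?y" by (simp add: maxc_def)
        then show "v \<in> {..<a}" using True by simp
      qed
      then show ?thesis using True ly by (simp add: c_def C_def)
    qed (simp add: c_def C_def)
  qed
  from ramsey_fin[OF Z0(1) fC cC] obtain Y where Y: "Y \<subseteq> Z0" "infinite Y"
    "\<forall>T T'. T \<subseteq> Y \<and> finite T \<and> card T = j \<and> T' \<subseteq> Y \<and> finite T' \<and> card T' = j \<longrightarrow> c T = c T'"
    by blast
  have key: "gv F x = c (set x - {a}) \<and> set x - {a} \<subseteq> Y \<and> finite (set x - {a}) \<and> card (set x - {a}) = j"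
    if x: "x \<in> cube (insert a Y) k" "shape x = p" "minc x = a" for x
  proof -
    have lx: "length x = k" "set x \<subseteq> insert a Y" using x(1) by (auto simp: cube_def)
    have "x \<noteq> []" using lx k by auto
    then have ax: "a \<in> set x" using minc_in x(3) by metis
    have si: "insert a (set x - {a}) = set x" using ax by auto
    have "x = inst p (set x)" using inst_shape x(2) by metis
    then have "gv F x = c (set x - {a})" unfolding gv_def c_def si using x(3) by metis
    moreover have "card (set x - {a}) = j" using ax card_shape[of x] x(2) j_def by simp
    ultimately show ?thesis using lx by auto
  qed
  show ?thesis
  proof (intro exI[of _ Y] conjI ballI impI)
    fix x x' assume "x \<in> cube (insert a Y) k" "x' \<in> cube (insert a Y) k"
      "shape x = p \<and> shape x' = p \<and> minc x = a \<and> minc x' = a"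
    then show "gv F x = gv F x'" using key[of x] key[of x'] Y(3) by metis
  qed (use Y in auto)
qed

lemma step_multi:
  fixes F :: "nat list \<Rightarrow> nat list"
  assumes Z0: "infinite Z0" "\<forall>z\<in>Z0. a < z"
    and FL: "\<forall>x. length x = k \<longrightarrow> length (F x) = r" and r: "r > 0" and k: "k > 0"
    and Q: "finite Q" "\<forall>p\<in>Q. length p = k"
  shows "\<exists>Z'\<subseteq>Z0. infinite Z' \<and> (\<forall>p\<in>Q. \<forall>x\<in>cube (insert a Z') k. \<forall>x'\<in>cube (insert a Z') k.
     shape x = p \<and> shape x' = p \<and> minc x = a \<and> minc x' = a \<longrightarrow> gv F x = gv F x')"
  using Q
proof (induction Q rule: finite_induct)
  case empty
  then show ?case using Z0 by auto
next
  case (insert p Q)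
  then obtain Z1 where Z1: "Z1 \<subseteq> Z0" "infinite Z1" "\<forall>p\<in>Q. \<forall>x\<in>cube (insert a Z1) k. \<forall>x'\<in>cube (insert a Z1) k.
     shape x = p \<and> shape x' = p \<and> minc x = a \<and> minc x' = a \<longrightarrow> gv F x = gv F x'" by auto
  have "\<forall>z\<in>Z1. a < z" using Z1 Z0 by auto
  from step_single[OF Z1(2) this FL r _ k, of p] insert.prems obtain Z2 where Z2: "Z2 \<subseteq> Z1" "infinite Z2"
    "\<forall>x\<in>cube (insert a Z2) k. \<forall>x'\<in>cube (insert a Z2) k.
     shape x = p \<and> shape x' = p \<and> minc x = a \<and> minc x' = a \<longrightarrow> gv F x = gv F x'" by auto
  have sub: "cube (insert a Z2) k \<subseteq> cube (insert a Z1) k" using Z2(1) by (auto simp: cube_def)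
  show ?case
    apply (rule exI[of _ Z2])
    using Z1 Z2 sub by blast
qed

definition hom :: "(nat list \<Rightarrow> nat list) \<Rightarrow> nat \<Rightarrow> nat set \<Rightarrow> nat set \<Rightarrow> bool" where
  "hom F k A Z = (\<forall>x\<in>cube (A \<union> Z) k. \<forall>x'\<in>cube (A \<union> Z) k.
     shape x = shape x' \<and> minc x = minc x' \<and> minc x \<in> A \<longrightarrow> gv F x = gv F x')"

lemma build:
  fixes F :: "nat list \<Rightarrow> nat list"
  assumes FL: "\<forall>x. length x = k \<longrightarrow> length (F x) = r" and r: "r > 0" and k: "k > 0"
  shows "\<exists>A Z. finite A \<and> card A = n \<and> infinite Z \<and> (\<forall>a\<in>A. \<forall>z\<in>Z. a < z) \<and> hom F k A Z"
proof (induction n)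
  case 0
  show ?case by (rule exI[of _ "{}"], rule exI[of _ UNIV]) (simp add: hom_def)
next
  case (Suc n)
  then obtain A Z where AZ: "finite A" "card A = n" "infinite Z" "\<forall>a\<in>A. \<forall>z\<in>Z. a < z" "hom F k A Z"
    by blast
  obtain a where a: "a \<in> Z" using AZ(3) by (metis finite.emptyI ex_in_conv)
  define Z0 where "Z0 = Z - {..a}"
  have Z0: "infinite Z0" "\<forall>z\<in>Z0. a < z" using AZ(3) unfolding Z0_def by auto
  define P where "P = {p. set p \<subseteq> {..<k} \<and> length p = k}"
  have P: "finite P" "\<forall>p\<in>P. length p = k" unfolding P_def by (auto simp: finite_lists_length_eq)
  from step_multi[OF Z0 FL r k P] obtain Z' where Z': "Z' \<subseteq> Z0" "infinite Z'"
    "\<forall>p\<in>P. \<forall>x\<in>cube (insert a Z') k. \<forall>x'\<in>cube (insert a Z') k.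
     shape x = p \<and> shape x' = p \<and> minc x = a \<and> minc x' = a \<longrightarrow> gv F x = gv F x'" by blast
  have aA: "a \<notin> A" using AZ(4) a by auto
  have lt: "\<forall>b\<in>insert a A. \<forall>z\<in>Z'. b < z" using AZ(4) Z' Z0 unfolding Z0_def by auto
  have "hom F k (insert a A) Z'"
    unfolding hom_def
  proof (intro ballI impI)
    fix x x' assume xs: "x \<in> cube (insert a A \<union> Z') k" "x' \<in> cube (insert a A \<union> Z') k"
      and h: "shape x = shape x' \<and> minc x = minc x' \<and> minc x \<in> insert a A"
    have sub: "cube (insert a A \<union> Z') k \<subseteq> cube (A \<union> Z) k"
      using a Z' unfolding Z0_def cube_def by auto
    show "gv F x = gv F x'"
    proof (cases "minc x \<in> A")
      case True
      then show ?thesis using AZ(5) xs sub h unfolding hom_def by blast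
    next
      case False
      then have ma: "minc x = a" "minc x' = a" using h by auto
      have inz: "y \<in> cube (insert a Z') k" if "y \<in> cube (insert a A \<union> Z') k" "minc y = a" for y
      proof -
        have "v \<in> insert a Z'" if "v \<in> set y" for v
        proof -
          have "a \<le> v" using minc_le[OF that] \<open>minc y = a\<close> by simp
          moreover have "v \<notin> A" using AZ(4) a calculation by (metis leD)
          ultimately show ?thesis using \<open>v \<in> set y\<close> \<open>y \<in> cube (insert a A \<union> Z') k\<close>
            by (auto simp: cube_def)
        qed
        then show ?thesis using that by (auto simp: cube_def)
      qed
      have "shape x \<in> P" using shape_bound[of x] xs(1) unfolding P_def cube_def shape_def by auto
      then show ?thesis using Z'(3) inz[OF xs(1) ma(1)] inz[OF xs(2) ma(2)] h ma by metis
    qed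
  qed
  then show ?case using AZ aA lt Z' by (intro exI[of _ "insert a A"] exI[of _ Z']) auto
qed

theorem theorem0p2:
  fixes k r p :: nat and F :: "nat list \<Rightarrow> nat list"
  assumes "k > 0" and "r > 0" and "p > 0"
    and "\<forall>x. length x = k \<longrightarrow> length (F x) = r"
  shows "\<exists>E :: nat set. finite E \<and> card E = p \<and>
           finite (regressive_values F (cube E k)) \<and>
           card (regressive_values F (cube E k)) \<le> k ^ k * p"
proof -
  obtain A Z where AZ: "finite A" "card A = p" "hom F k A Z"
    using build[OF assms(4) assms(2) assms(1), of p] by blast
  define P where "P = {q. set q \<subseteq> {..<k} \<and> length q = k}"
  have fP: "finite P" "card P = k ^ k" unfolding P_def
    by (auto simp: finite_lists_length_eq card_lists_length_eq)
  define Psi where "Psi = (\<lambda>(q, b). the (gv F (SOME x. x \<in> cube A k \<and> shape x = q \<and> minc x = b)))"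
  have sub: "regressive_values F (cube A k) \<subseteq> Psi ` (P \<times> A)"
  proof
    fix y assume "y \<in> regressive_values F (cube A k)"
    then obtain x where x: "x \<in> cube A k" "F x = y" "maxc y < minc x"
      unfolding regressive_values_def by blast
    have g: "gv F x = Some y" using x by (simp add: gv_def)
    have ne: "x \<noteq> []" using x(1) assms(1) by (auto simp: cube_def)
    have mA: "minc x \<in> A" using minc_in[OF ne] x(1) by (auto simp: cube_def)
    define x' where "x' = (SOME x'. x' \<in> cube A k \<and> shape x' = shape x \<and> minc x' = minc x)"
    have x': "x' \<in> cube A k \<and> shape x' = shape x \<and> minc x' = minc x"
      unfolding x'_def by (rule someI[of _ x]) (use x in auto)
    have cs: "cube A k \<subseteq> cube (A \<union> Z) k" by (auto simp: cube_def)
    have "gv F x' = gv F x" using AZ(3) x' x(1) cs mA unfolding hom_def by (metis subsetD)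
    then have "Psi (shape x, minc x) = y" using g unfolding Psi_def x'_def by simp
    moreover have "shape x \<in> P" using shape_bound[of x] x(1) unfolding P_def cube_def shape_def by auto
    ultimately show "y \<in> Psi ` (P \<times> A)" using mA by force
  qed
  have fin: "finite (Psi ` (P \<times> A))" using fP AZ by simp
  have "card (regressive_values F (cube A k)) \<le> card (Psi ` (P \<times> A))"
    using card_mono[OF fin sub] .
  also have "\<dots> \<le> card (P \<times> A)" by (rule card_image_le) (use fP AZ in simp)
  also have "\<dots> = k ^ k * p" using fP AZ by (simp add: card_cartesian_product)
  finally show ?thesis using AZ fin sub finite_subset by blast
qed

end
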